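(* Let $V$ be a finite-dimensional complex vector space with Lie brackets $[\,,]$ and $\{\,,\}$, $\mathfrak{g}=(V,[\,,])$, $\mathfrak{n}=(V,\{\,,\})$, with $\mathfrak{n}$ semisimple. Let $x\cdot y$ be a post-Lie algebra structure on $(\mathfrak{g},\mathfrak{n})$ with $x\cdot y=\{\phi(x),y\}$ for some $\phi\in\operatorname{End}(V)$, and assume that $[x,y]=\tau(\{x,y\})$ for all $x,y\in V$, for some $\tau\in\operatorname{End}(V)$. Then $\phi\in\operatorname{QDer}(\mathfrak{n})$.
   Context: A post-Lie algebra structure on $(\mathfrak{g},\mathfrak{n})$ is a bilinear product $x\cdot y$ on $V$ satisfying, for all $x,y,z\in V$: (1) $x\cdot y-y\cdot x=[x,y]-\{x,y\}$; (2) $[x,y]\cdot z=x\cdot(y\cdot z)-y\cdot(x\cdot z)$; (3) $x\cdot\{y,z\}=\{x\cdot y,z\}+\{y,x\cdot z\}$. The quasiderivations of $\mathfrak{n}$ are $\operatorname{QDer}(\mathfrak{n})=\{\phi\in\operatorname{End}(\mathfrak{n})\mid\exists\,\sigma\in\operatorname{End}(\mathfrak{n})\text{ with }\sigma(\{x,y\})=\{\phi(x),y\}+\{x,\phi(y)\}\ \forall x,y\}$. *)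

theory Defs
  imports Complex_Main
begin

definition fd_complex_vs :: "(complex \<Rightarrow> 'v::ab_group_add \<Rightarrow> 'v) \<Rightarrow> bool" where
  "fd_complex_vs scale \<longleftrightarrow> (\<exists>B. finite_dimensional_vector_space scale B)"

definition is_End :: "(complex \<Rightarrow> 'v::ab_group_add \<Rightarrow> 'v) \<Rightarrow> ('v \<Rightarrow> 'v) \<Rightarrow> bool" where
  "is_End scale f \<longleftrightarrow> Vector_Spaces.linear scale scale f"

definition is_bilinear :: "(complex \<Rightarrow> 'v::ab_group_add \<Rightarrow> 'v) \<Rightarrow> ('v \<Rightarrow> 'v \<Rightarrow> 'v) \<Rightarrow> bool" where
  "is_bilinear scale b \<longleftrightarrow>
     (\<forall>y. Vector_Spaces.linear scale scale (\<lambda>x. b x y)) \<and>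
     (\<forall>x. Vector_Spaces.linear scale scale (\<lambda>y. b x y))"

definition lie_bracket :: "(complex \<Rightarrow> 'v::ab_group_add \<Rightarrow> 'v) \<Rightarrow> ('v \<Rightarrow> 'v \<Rightarrow> 'v) \<Rightarrow> bool" where
  "lie_bracket scale b \<longleftrightarrow> is_bilinear scale b \<and> (\<forall>x. b x x = 0) \<and>
     (\<forall>x y z. b x (b y z) + b y (b z x) + b z (b x y) = 0)"

definition lie_ideal :: "(complex \<Rightarrow> 'v::ab_group_add \<Rightarrow> 'v) \<Rightarrow> ('v \<Rightarrow> 'v \<Rightarrow> 'v) \<Rightarrow> 'v set \<Rightarrow> bool" where
  "lie_ideal scale b I \<longleftrightarrow> module.subspace scale I \<and> (\<forall>x y. y \<in> I \<longrightarrow> b x y \<in> I)"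

fun derived_series :: "(complex \<Rightarrow> 'v::ab_group_add \<Rightarrow> 'v) \<Rightarrow> ('v \<Rightarrow> 'v \<Rightarrow> 'v) \<Rightarrow> 'v set \<Rightarrow> nat \<Rightarrow> 'v set" where
  "derived_series scale b I 0 = I"
| "derived_series scale b I (Suc k) =
     module.span scale {b x y | x y. x \<in> derived_series scale b I k \<and> y \<in> derived_series scale b I k}"

definition solvable_ideal :: "(complex \<Rightarrow> 'v::ab_group_add \<Rightarrow> 'v) \<Rightarrow> ('v \<Rightarrow> 'v \<Rightarrow> 'v) \<Rightarrow> 'v set \<Rightarrow> bool" where
  "solvable_ideal scale b I \<longleftrightarrow> lie_ideal scale b I \<and> (\<exists>k. derived_series scale b I k = {0})"

definition semisimple :: "(complex \<Rightarrow> 'v::ab_group_add \<Rightarrow> 'v) \<Rightarrow> ('v \<Rightarrow> 'v \<Rightarrow> 'v) \<Rightarrow> bool" where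
  "semisimple scale b \<longleftrightarrow> lie_bracket scale b \<and>
     (\<forall>I. solvable_ideal scale b I \<longrightarrow> I = {0})"

text \<open>Post-Lie algebra structure on (g, n), g = (V, lb), n = (V, cb).\<close>
definition post_lie_structure ::
  "(complex \<Rightarrow> 'v::ab_group_add \<Rightarrow> 'v) \<Rightarrow> ('v \<Rightarrow> 'v \<Rightarrow> 'v) \<Rightarrow> ('v \<Rightarrow> 'v \<Rightarrow> 'v) \<Rightarrow> ('v \<Rightarrow> 'v \<Rightarrow> 'v) \<Rightarrow> bool" where
  "post_lie_structure scale lb cb pr \<longleftrightarrow> is_bilinear scale pr \<and>
     (\<forall>x y. pr x y - pr y x = lb x y - cb x y) \<and>
     (\<forall>x y z. pr (lb x y) z = pr x (pr y z) - pr y (pr x z)) \<and>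
     (\<forall>x y z. pr x (cb y z) = cb (pr x y) z + cb y (pr x z))"

definition QDer :: "(complex \<Rightarrow> 'v::ab_group_add \<Rightarrow> 'v) \<Rightarrow> ('v \<Rightarrow> 'v \<Rightarrow> 'v) \<Rightarrow> ('v \<Rightarrow> 'v) set" where
  "QDer scale cb = {\<phi>. is_End scale \<phi> \<and>
     (\<exists>\<sigma>. is_End scale \<sigma> \<and> (\<forall>x y. \<sigma> (cb x y) = cb (\<phi> x) y + cb x (\<phi> y)))}"

end

theory Submission
  imports Defs
begin

theorem proposition6p1:
  fixes scale :: "complex \<Rightarrow> 'v::ab_group_add \<Rightarrow> 'v"
    and lb cb :: "'v \<Rightarrow> 'v \<Rightarrow> 'v"
    and \<phi> \<tau> :: "'v \<Rightarrow> 'v"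
  assumes "fd_complex_vs scale"
    and "lie_bracket scale lb"
    and "lie_bracket scale cb"
    and "semisimple scale cb"
    and "is_End scale \<phi>"
    and "post_lie_structure scale lb cb (\<lambda>x y. cb (\<phi> x) y)"
    and "is_End scale \<tau>"
    and "\<forall>x y. lb x y = \<tau> (cb x y)"
  shows "\<phi> \<in> QDer scale cb"
proof -
  have lt: "Vector_Spaces.linear scale scale \<tau>" using assms(7) by (simp add: is_End_def)
  then have vs: "vector_space scale" and tadd: "\<And>x y. \<tau> (x + y) = \<tau> x + \<tau> y"
    and tsc: "\<And>c x. \<tau> (scale c x) = scale c (\<tau> x)"
    by (auto simp: Vector_Spaces.linear_iff)
  have "Vector_Spaces.linear scale scale (\<lambda>x. \<tau> x - x)"
  proof -
    have m: "module scale" using vs by (simp add: vector_space_def module_def)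
    show ?thesis
      unfolding Vector_Spaces.linear_iff using vs tadd tsc module.scale_right_diff_distrib[OF m]
      by (simp add: algebra_simps)
  qed
  then have E: "is_End scale (\<lambda>x. \<tau> x - x)" by (simp add: is_End_def)
  have bil: "is_bilinear scale cb" and alt: "\<And>x. cb x x = 0"
    using assms(3) by (auto simp: lie_bracket_def)
  have l1: "\<And>x y z. cb (x + y) z = cb x z + cb y z"
    using bil by (auto simp: is_bilinear_def Vector_Spaces.linear_iff)
  have l2: "\<And>x y z. cb z (x + y) = cb z x + cb z y"
    using bil by (auto simp: is_bilinear_def Vector_Spaces.linear_iff)
  have anti: "\<And>x y. cb x y = - cb y x"
  proof -
    fix x y
    have "cb (x + y) (x + y) = cb x x + cb x y + (cb y x + cb y y)" by (simp add: l1 l2 add.assoc)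
    then have "cb x y + cb y x = 0" by (simp only: alt) simp
    then show "cb x y = - cb y x" by (simp add: eq_neg_iff_add_eq_0)
  qed
  have ax: "\<And>x y. cb (\<phi> x) y - cb (\<phi> y) x = lb x y - cb x y"
    using assms(6) by (simp add: post_lie_structure_def)
  have key: "\<And>x y. \<tau> (cb x y) - cb x y = cb (\<phi> x) y + cb x (\<phi> y)"
  proof -
    fix x y
    have "cb x (\<phi> y) = - cb (\<phi> y) x" by (rule anti)
    then show "\<tau> (cb x y) - cb x y = cb (\<phi> x) y + cb x (\<phi> y)"
      using ax[of x y] assms(8) by simp
  qed
  show ?thesis unfolding QDer_def using assms(5) E key by blast
qed

end
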